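(* Let $\mathbb E$ be a weakly congruence distributive category. Then (1) for every object $X$, every internal group in the fiber $Pt_X\mathbb E$ is trivial, i.e. its underlying split epimorphism $f:A\to X$ is an isomorphism; (2) every object of $\mathbb E$ carrying an internal associative Mal'tsev structure is a subobject of the terminal object (its map to $1$ is a monomorphism).
   Context: A finitely complete category $\mathbb E$ is weakly congruence distributive if for any equivalence relations $R,S,T$ on an object $X$ such that the supremum $R\vee S$ exists among equivalence relations on $X$, the conditions $T\wedge R=\Delta_X$ and $T\wedge S=\Delta_X$ imply $T\wedge(R\vee S)=\Delta_X$, where $\Delta_X$ is the discrete relation. $Pt_X\mathbb E$ is the category of triples $(A,f,s)$, $f:A\to X$, $s:X\to A$, $fs=1_X$, with morphisms commuting with $f$ and $s$; it is finitely complete (products are pullbacks over $X$), with terminal object $(X,1_X,1_X)$. An associative Mal'tsev structure on $X$ is $p:X^3\to X$ with $p(x,y,y)=x=p(y,y,x)$ and $p(x,y,p(z,u,v))=p(p(x,y,z),u,v)$. *)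

theory Defs
  imports Main
begin

record ('o,'a) cat =
  Ob :: "'o set"
  Ar :: "'a set"
  Dom :: "'a \<Rightarrow> 'o"
  Cod :: "'a \<Rightarrow> 'o"
  Id :: "'o \<Rightarrow> 'a"
  Comp :: "'a \<Rightarrow> 'a \<Rightarrow> 'a"   (* Comp C g f = g \<circ> f *)

definition category :: "('o,'a) cat \<Rightarrow> bool" where
  "category C \<longleftrightarrow>
     (\<forall>f\<in>Ar C. Dom C f \<in> Ob C \<and> Cod C f \<in> Ob C) \<and>
     (\<forall>x\<in>Ob C. Id C x \<in> Ar C \<and> Dom C (Id C x) = x \<and> Cod C (Id C x) = x) \<and>
     (\<forall>f\<in>Ar C. \<forall>g\<in>Ar C. Cod C f = Dom C g \<longrightarrow>
        Comp C g f \<in> Ar C \<and> Dom C (Comp C g f) = Dom C f \<and> Cod C (Comp C g f) = Cod C g) \<and>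
     (\<forall>f\<in>Ar C. \<forall>g\<in>Ar C. \<forall>h\<in>Ar C. Cod C f = Dom C g \<longrightarrow> Cod C g = Dom C h \<longrightarrow>
        Comp C h (Comp C g f) = Comp C (Comp C h g) f) \<and>
     (\<forall>f\<in>Ar C. Comp C f (Id C (Dom C f)) = f \<and> Comp C (Id C (Cod C f)) f = f)"

definition hom :: "('o,'a) cat \<Rightarrow> 'o \<Rightarrow> 'o \<Rightarrow> 'a set" where
  "hom C x y = {f \<in> Ar C. Dom C f = x \<and> Cod C f = y}"

definition mono :: "('o,'a) cat \<Rightarrow> 'a \<Rightarrow> bool" where
  "mono C m \<longleftrightarrow> m \<in> Ar C \<and>
     (\<forall>a\<in>Ar C. \<forall>b\<in>Ar C. Dom C a = Dom C b \<longrightarrow> Cod C a = Dom C m \<longrightarrow> Cod C b = Dom C m \<longrightarrow>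
        Comp C m a = Comp C m b \<longrightarrow> a = b)"

definition iso :: "('o,'a) cat \<Rightarrow> 'a \<Rightarrow> bool" where
  "iso C f \<longleftrightarrow> f \<in> Ar C \<and>
     (\<exists>g \<in> hom C (Cod C f) (Dom C f). Comp C g f = Id C (Dom C f) \<and> Comp C f g = Id C (Cod C f))"

definition terminal :: "('o,'a) cat \<Rightarrow> 'o \<Rightarrow> bool" where
  "terminal C T \<longleftrightarrow> T \<in> Ob C \<and> (\<forall>x\<in>Ob C. \<exists>!f. f \<in> hom C x T)"

definition bang :: "('o,'a) cat \<Rightarrow> 'o \<Rightarrow> 'o \<Rightarrow> 'a" where
  "bang C T x = (THE f. f \<in> hom C x T)"

definition pullback :: "('o,'a) cat \<Rightarrow> 'a \<Rightarrow> 'a \<Rightarrow> 'o \<Rightarrow> 'a \<Rightarrow> 'a \<Rightarrow> bool" where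
  "pullback C f g P p q \<longleftrightarrow> f \<in> Ar C \<and> g \<in> Ar C \<and> Cod C f = Cod C g \<and> P \<in> Ob C \<and>
     p \<in> hom C P (Dom C f) \<and> q \<in> hom C P (Dom C g) \<and> Comp C f p = Comp C g q \<and>
     (\<forall>Z\<in>Ob C. \<forall>a\<in>hom C Z (Dom C f). \<forall>b\<in>hom C Z (Dom C g). Comp C f a = Comp C g b \<longrightarrow>
        (\<exists>!u. u \<in> hom C Z P \<and> Comp C p u = a \<and> Comp C q u = b))"

definition finitely_complete :: "('o,'a) cat \<Rightarrow> bool" where
  "finitely_complete C \<longleftrightarrow> category C \<and> (\<exists>T. terminal C T) \<and>
     (\<forall>f\<in>Ar C. \<forall>g\<in>Ar C. Cod C f = Cod C g \<longrightarrow> (\<exists>P p q. pullback C f g P p q))"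

definition product :: "('o,'a) cat \<Rightarrow> 'o \<Rightarrow> 'o \<Rightarrow> 'o \<Rightarrow> 'a \<Rightarrow> 'a \<Rightarrow> bool" where
  "product C x y P p1 p2 \<longleftrightarrow> P \<in> Ob C \<and> p1 \<in> hom C P x \<and> p2 \<in> hom C P y \<and>
     (\<forall>Z\<in>Ob C. \<forall>a\<in>hom C Z x. \<forall>b\<in>hom C Z y.
        (\<exists>!u. u \<in> hom C Z P \<and> Comp C p1 u = a \<and> Comp C p2 u = b))"

definition pairing :: "('o,'a) cat \<Rightarrow> 'o \<Rightarrow> 'a \<Rightarrow> 'a \<Rightarrow> 'a \<Rightarrow> 'a \<Rightarrow> 'a" where
  "pairing C P p1 p2 a b = (THE u. u \<in> hom C (Dom C a) P \<and> Comp C p1 u = a \<and> Comp C p2 u = b)"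

definition triple_product ::
  "('o,'a) cat \<Rightarrow> 'o \<Rightarrow> 'o \<Rightarrow> 'a \<Rightarrow> 'a \<Rightarrow> 'a \<Rightarrow> bool" where
  "triple_product C X Q q1 q2 q3 \<longleftrightarrow> Q \<in> Ob C \<and> q1 \<in> hom C Q X \<and> q2 \<in> hom C Q X \<and> q3 \<in> hom C Q X \<and>
     (\<forall>Z\<in>Ob C. \<forall>a\<in>hom C Z X. \<forall>b\<in>hom C Z X. \<forall>c\<in>hom C Z X.
        (\<exists>!u. u \<in> hom C Z Q \<and> Comp C q1 u = a \<and> Comp C q2 u = b \<and> Comp C q3 u = c))"

definition tpairing :: "('o,'a) cat \<Rightarrow> 'o \<Rightarrow> 'a \<Rightarrow> 'a \<Rightarrow> 'a \<Rightarrow> 'a \<Rightarrow> 'a \<Rightarrow> 'a \<Rightarrow> 'a" where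
  "tpairing C Q q1 q2 q3 a b c =
     (THE u. u \<in> hom C (Dom C a) Q \<and> Comp C q1 u = a \<and> Comp C q2 u = b \<and> Comp C q3 u = c)"

definition internal_group ::
  "('o,'a) cat \<Rightarrow> 'o \<Rightarrow> 'o \<Rightarrow> 'o \<Rightarrow> 'a \<Rightarrow> 'a \<Rightarrow> 'a \<Rightarrow> 'a \<Rightarrow> 'a \<Rightarrow> bool" where
  "internal_group C G T P p1 p2 m e i \<longleftrightarrow>
     category C \<and> G \<in> Ob C \<and> terminal C T \<and> product C G G P p1 p2 \<and>
     m \<in> hom C P G \<and> e \<in> hom C T G \<and> i \<in> hom C G G \<and>
     (\<forall>Z\<in>Ob C. \<forall>x\<in>hom C Z G. \<forall>y\<in>hom C Z G. \<forall>z\<in>hom C Z G.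
        (let mul = (\<lambda>a b. Comp C m (pairing C P p1 p2 a b));
             u = Comp C e (bang C T Z)
         in mul (mul x y) z = mul x (mul y z) \<and>
            mul u x = x \<and> mul x u = x \<and>
            mul x (Comp C i x) = u \<and> mul (Comp C i x) x = u))"

definition pt_cat :: "('o,'a) cat \<Rightarrow> 'o \<Rightarrow>
    ('o \<times> 'a \<times> 'a, ('o \<times> 'a \<times> 'a) \<times> ('o \<times> 'a \<times> 'a) \<times> 'a) cat" where
  "pt_cat C X =
    \<lparr> Ob = {(A,f,s). A \<in> Ob C \<and> f \<in> hom C A X \<and> s \<in> hom C X A \<and> Comp C f s = Id C X},
      Ar = {(a,b,h). a \<in> {(A,f,s). A \<in> Ob C \<and> f \<in> hom C A X \<and> s \<in> hom C X A \<and> Comp C f s = Id C X}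
                    \<and> b \<in> {(A,f,s). A \<in> Ob C \<and> f \<in> hom C A X \<and> s \<in> hom C X A \<and> Comp C f s = Id C X}
                    \<and> h \<in> hom C (fst a) (fst b)
                    \<and> Comp C (fst (snd b)) h = fst (snd a)
                    \<and> Comp C h (snd (snd a)) = snd (snd b)},
      Dom = (\<lambda>(a,b,h). a),
      Cod = (\<lambda>(a,b,h). b),
      Id = (\<lambda>a. (a, a, Id C (fst a))),
      Comp = (\<lambda>(b,c,k) (a,b',h). (a, c, Comp C k h)) \<rparr>"

definition relation :: "('o,'a) cat \<Rightarrow> 'o \<Rightarrow> 'a \<times> 'a \<Rightarrow> bool" where
  "relation C X r \<longleftrightarrow> X \<in> Ob C \<and> fst r \<in> hom C (Dom C (fst r)) X \<and> snd r \<in> hom C (Dom C (fst r)) X \<and>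
     (\<forall>a\<in>Ar C. \<forall>b\<in>Ar C. Dom C a = Dom C b \<longrightarrow> Cod C a = Dom C (fst r) \<longrightarrow> Cod C b = Dom C (fst r) \<longrightarrow>
        Comp C (fst r) a = Comp C (fst r) b \<longrightarrow> Comp C (snd r) a = Comp C (snd r) b \<longrightarrow> a = b)"

definition rel_le :: "('o,'a) cat \<Rightarrow> 'a \<times> 'a \<Rightarrow> 'a \<times> 'a \<Rightarrow> bool" where
  "rel_le C r s \<longleftrightarrow> (\<exists>h \<in> hom C (Dom C (fst r)) (Dom C (fst s)).
      Comp C (fst s) h = fst r \<and> Comp C (snd s) h = snd r)"

definition diag :: "('o,'a) cat \<Rightarrow> 'o \<Rightarrow> 'a \<times> 'a" where
  "diag C X = (Id C X, Id C X)"

definition equiv_rel :: "('o,'a) cat \<Rightarrow> 'o \<Rightarrow> 'a \<times> 'a \<Rightarrow> bool" where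
  "equiv_rel C X r \<longleftrightarrow> relation C X r \<and>
     rel_le C (diag C X) r \<and>
     rel_le C (snd r, fst r) r \<and>
     (\<forall>P p q. pullback C (snd r) (fst r) P p q \<longrightarrow>
        rel_le C (Comp C (fst r) p, Comp C (snd r) q) r)"

definition rel_meet :: "('o,'a) cat \<Rightarrow> 'o \<Rightarrow> 'a \<times> 'a \<Rightarrow> 'a \<times> 'a \<Rightarrow> 'a \<times> 'a \<Rightarrow> bool" where
  "rel_meet C X t r d \<longleftrightarrow> relation C X d \<and> rel_le C d t \<and> rel_le C d r \<and>
     (\<forall>u. relation C X u \<and> rel_le C u t \<and> rel_le C u r \<longrightarrow> rel_le C u d)"

definition equiv_sup :: "('o,'a) cat \<Rightarrow> 'o \<Rightarrow> 'a \<times> 'a \<Rightarrow> 'a \<times> 'a \<Rightarrow> 'a \<times> 'a \<Rightarrow> bool" where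
  "equiv_sup C X r s j \<longleftrightarrow> equiv_rel C X j \<and> rel_le C r j \<and> rel_le C s j \<and>
     (\<forall>e. equiv_rel C X e \<and> rel_le C r e \<and> rel_le C s e \<longrightarrow> rel_le C j e)"

definition weakly_cong_distributive :: "('o,'a) cat \<Rightarrow> bool" where
  "weakly_cong_distributive C \<longleftrightarrow> finitely_complete C \<and>
     (\<forall>X\<in>Ob C. \<forall>r s t j. equiv_rel C X r \<and> equiv_rel C X s \<and> equiv_rel C X t \<and>
        equiv_sup C X r s j \<and> rel_meet C X t r (diag C X) \<and> rel_meet C X t s (diag C X)
        \<longrightarrow> rel_meet C X t j (diag C X))"

definition assoc_maltsev :: "('o,'a) cat \<Rightarrow> 'o \<Rightarrow> 'o \<Rightarrow> 'a \<Rightarrow> 'a \<Rightarrow> 'a \<Rightarrow> 'a \<Rightarrow> bool" where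
  "assoc_maltsev C X Q q1 q2 q3 p \<longleftrightarrow> triple_product C X Q q1 q2 q3 \<and> p \<in> hom C Q X \<and>
     (\<forall>Z\<in>Ob C. \<forall>x\<in>hom C Z X. \<forall>y\<in>hom C Z X. \<forall>z\<in>hom C Z X. \<forall>u\<in>hom C Z X. \<forall>v\<in>hom C Z X.
        (let P3 = (\<lambda>a b c. Comp C p (tpairing C Q q1 q2 q3 a b c))
         in P3 x y y = x \<and> P3 y y x = x \<and> P3 x y (P3 z u v) = P3 (P3 x y z) u v))"

end

theory Submission
  imports Defs
begin


lemma cat_D1: "category C \<Longrightarrow> \<forall>f\<in>Ar C. Dom C f \<in> Ob C \<and> Cod C f \<in> Ob C"
  unfolding category_def by (elim conjE) assumption

lemma cat_D2: "category C \<Longrightarrow> \<forall>x\<in>Ob C. Id C x \<in> Ar C \<and> Dom C (Id C x) = x \<and> Cod C (Id C x) = x"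
  unfolding category_def by (elim conjE) assumption

lemma cat_D3: "category C \<Longrightarrow> \<forall>f\<in>Ar C. \<forall>g\<in>Ar C. Cod C f = Dom C g \<longrightarrow>
        Comp C g f \<in> Ar C \<and> Dom C (Comp C g f) = Dom C f \<and> Cod C (Comp C g f) = Cod C g"
  unfolding category_def by (elim conjE) assumption

lemma cat_D4: "category C \<Longrightarrow> \<forall>f\<in>Ar C. \<forall>g\<in>Ar C. \<forall>h\<in>Ar C. Cod C f = Dom C g \<longrightarrow> Cod C g = Dom C h \<longrightarrow>
        Comp C h (Comp C g f) = Comp C (Comp C h g) f"
  unfolding category_def by (elim conjE) assumption

lemma cat_D5: "category C \<Longrightarrow> \<forall>f\<in>Ar C. Comp C f (Id C (Dom C f)) = f \<and> Comp C (Id C (Cod C f)) f = f"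
  unfolding category_def by (elim conjE) assumption

lemma hom_iff: "f \<in> hom C x y \<longleftrightarrow> f \<in> Ar C \<and> Dom C f = x \<and> Cod C f = y"
  by (simp add: hom_def)

lemma cat_comp_hom: "category C \<Longrightarrow> f \<in> hom C x y \<Longrightarrow> g \<in> hom C y z \<Longrightarrow> Comp C g f \<in> hom C x z"
  using cat_D3[of C] unfolding hom_iff by metis

lemma cat_assoc: "category C \<Longrightarrow> f \<in> hom C w x \<Longrightarrow> g \<in> hom C x y \<Longrightarrow> h \<in> hom C y z \<Longrightarrow>
   Comp C h (Comp C g f) = Comp C (Comp C h g) f"
  using cat_D4[of C] unfolding hom_iff by metis

lemma cat_id_hom: "category C \<Longrightarrow> x \<in> Ob C \<Longrightarrow> Id C x \<in> hom C x x"
  using cat_D2[of C] unfolding hom_iff by metis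

lemma cat_id_l: "category C \<Longrightarrow> f \<in> hom C x y \<Longrightarrow> Comp C (Id C y) f = f"
  using cat_D5[of C] unfolding hom_iff by metis

lemma cat_id_r: "category C \<Longrightarrow> f \<in> hom C x y \<Longrightarrow> Comp C f (Id C x) = f"
  using cat_D5[of C] unfolding hom_iff by metis

lemma hom_obs: "category C \<Longrightarrow> f \<in> hom C x y \<Longrightarrow> x \<in> Ob C \<and> y \<in> Ob C"
  using cat_D1[of C] unfolding hom_iff by metis

lemma ar_hom: "f \<in> Ar C \<Longrightarrow> f \<in> hom C (Dom C f) (Cod C f)"
  unfolding hom_def by auto

lemma pb_props:
  assumes "pullback C f g P p q" "f \<in> hom C A Y" "g \<in> hom C B Y"
  shows "P \<in> Ob C" "p \<in> hom C P A" "q \<in> hom C P B" "Comp C f p = Comp C g q"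
proof -
  have "P \<in> Ob C \<and> p \<in> hom C P (Dom C f) \<and> q \<in> hom C P (Dom C g) \<and> Comp C f p = Comp C g q"
    using assms(1) unfolding pullback_def by (elim conjE) simp
  then show "P \<in> Ob C" "p \<in> hom C P A" "q \<in> hom C P B" "Comp C f p = Comp C g q"
    using assms(2,3) by (auto simp: hom_iff)
qed

lemma pb_med:
  assumes "pullback C f g P p q" "f \<in> hom C A Y" "g \<in> hom C B Y"
    "Z \<in> Ob C" "a \<in> hom C Z A" "b \<in> hom C Z B" "Comp C f a = Comp C g b"
  shows "\<exists>u. u \<in> hom C Z P \<and> Comp C p u = a \<and> Comp C q u = b"
proof -
  have U: "\<forall>Z\<in>Ob C. \<forall>a\<in>hom C Z (Dom C f). \<forall>b\<in>hom C Z (Dom C g). Comp C f a = Comp C g b \<longrightarrow>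
        (\<exists>!u. u \<in> hom C Z P \<and> Comp C p u = a \<and> Comp C q u = b)"
    using assms(1) unfolding pullback_def by (elim conjE) assumption
  have "Dom C f = A" "Dom C g = B" using assms(2,3) by (auto simp: hom_iff)
  then have "\<exists>!u. u \<in> hom C Z P \<and> Comp C p u = a \<and> Comp C q u = b"
    using U assms(4-7) by auto
  then show ?thesis by blast
qed

lemma pb_uniq:
  assumes "category C" "pullback C f g P p q" "f \<in> hom C A Y" "g \<in> hom C B Y"
    "u \<in> hom C Z P" "v \<in> hom C Z P" "Comp C p u = Comp C p v" "Comp C q u = Comp C q v"
  shows "u = v"
proof -
  have P: "p \<in> hom C P A" "q \<in> hom C P B" "Comp C f p = Comp C g q"
    using pb_props[OF assms(2-4)] by auto
  have Z: "Z \<in> Ob C" using hom_obs[OF assms(1,5)] by auto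
  have a: "Comp C p u \<in> hom C Z A" "Comp C q u \<in> hom C Z B"
    using cat_comp_hom[OF assms(1)] assms(5) P by auto
  have eq: "Comp C f (Comp C p u) = Comp C g (Comp C q u)"
    using cat_assoc[OF assms(1) assms(5) P(1) assms(3)] cat_assoc[OF assms(1) assms(5) P(2) assms(4)] P(3)
    by simp
  have U: "\<forall>Z\<in>Ob C. \<forall>a\<in>hom C Z (Dom C f). \<forall>b\<in>hom C Z (Dom C g). Comp C f a = Comp C g b \<longrightarrow>
        (\<exists>!u. u \<in> hom C Z P \<and> Comp C p u = a \<and> Comp C q u = b)"
    using assms(2) unfolding pullback_def by (elim conjE) assumption
  have "Dom C f = A" "Dom C g = B" using assms(3,4) by (auto simp: hom_iff)
  then have "\<exists>!w. w \<in> hom C Z P \<and> Comp C p w = Comp C p u \<and> Comp C q w = Comp C q u"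
    using U Z a eq by auto
  then show ?thesis using assms(5-8) by auto
qed

lemma pb_exists:
  assumes "finitely_complete C" "f \<in> hom C A Y" "g \<in> hom C B Y"
  shows "\<exists>P p q. pullback C f g P p q"
proof -
  have "\<forall>f\<in>Ar C. \<forall>g\<in>Ar C. Cod C f = Cod C g \<longrightarrow> (\<exists>P p q. pullback C f g P p q)"
    using assms(1) unfolding finitely_complete_def by (elim conjE) assumption
  then show ?thesis using assms(2,3) by (auto simp: hom_iff)
qed

definition rel_holds :: "('o,'a) cat \<Rightarrow> 'a \<times> 'a \<Rightarrow> 'a \<Rightarrow> 'a \<Rightarrow> bool" where
  "rel_holds C e x y \<longleftrightarrow> (\<exists>h \<in> hom C (Dom C x) (Dom C (fst e)). Comp C (fst e) h = x \<and> Comp C (snd e) h = y)"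

lemma rel_le_holds: "rel_le C r e = rel_holds C e (fst r) (snd r)"
  unfolding rel_le_def rel_holds_def by simp

lemma relation_props:
  assumes "relation C W e"
  shows "W \<in> Ob C" "fst e \<in> hom C (Dom C (fst e)) W" "snd e \<in> hom C (Dom C (fst e)) W"
  using assms unfolding relation_def by auto

lemma kp_related:
  assumes "category C" "pullback C g g K k1 k2" "g \<in> hom C W Y"
    "x \<in> hom C Z W" "y \<in> hom C Z W" "Comp C g x = Comp C g y"
  shows "\<exists>h \<in> hom C Z K. Comp C k1 h = x \<and> Comp C k2 h = y"
  using pb_med[OF assms(2,3,3) _ assms(4,5,6)] hom_obs[OF assms(1,4)] by auto

lemma kp_rel_holds:
  assumes "category C" "pullback C g g K k1 k2" "g \<in> hom C W Y"
    "x \<in> hom C Z W" "y \<in> hom C Z W" "Comp C g x = Comp C g y"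
  shows "rel_holds C (k1,k2) x y"
proof -
  have "k1 \<in> hom C K W" using pb_props[OF assms(2,3,3)] by auto
  then show ?thesis using kp_related[OF assms] assms(4) unfolding rel_holds_def hom_def by auto
qed

lemma kp_relation:
  assumes "category C" "pullback C g g K k1 k2" "g \<in> hom C W Y"
  shows "relation C W (k1,k2)"
proof -
  have P: "K \<in> Ob C" "k1 \<in> hom C K W" "k2 \<in> hom C K W" using pb_props[OF assms(2,3,3)] by auto
  have W: "W \<in> Ob C" using hom_obs[OF assms(1,3)] by auto
  show ?thesis unfolding relation_def
  proof (intro conjI ballI impI)
    show "W \<in> Ob C" by fact
    show "fst (k1, k2) \<in> hom C (Dom C (fst (k1, k2))) W" using P by (simp add: hom_def)
    show "snd (k1, k2) \<in> hom C (Dom C (fst (k1, k2))) W" using P by (simp add: hom_def)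
    fix a b assume ab: "a \<in> Ar C" "b \<in> Ar C" "Dom C a = Dom C b" "Cod C a = Dom C (fst (k1, k2))"
      "Cod C b = Dom C (fst (k1, k2))" "Comp C (fst (k1, k2)) a = Comp C (fst (k1, k2)) b"
      "Comp C (snd (k1, k2)) a = Comp C (snd (k1, k2)) b"
    have "a \<in> hom C (Dom C a) K" "b \<in> hom C (Dom C a) K" using ab P by (auto simp: hom_def)
    then show "a = b" using pb_uniq[OF assms(1,2,3,3)] ab by auto
  qed
qed

lemma kp_equiv:
  assumes "category C" "pullback C g g K k1 k2" "g \<in> hom C W Y"
  shows "equiv_rel C W (k1,k2)"
proof -
  have P: "K \<in> Ob C" "k1 \<in> hom C K W" "k2 \<in> hom C K W" "Comp C g k1 = Comp C g k2"
    using pb_props[OF assms(2,3,3)] by auto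
  have W: "W \<in> Ob C" using hom_obs[OF assms(1,3)] by auto
  have I: "Id C W \<in> hom C W W" using cat_id_hom[OF assms(1) W] .
  have refl: "rel_le C (diag C W) (k1,k2)"
    unfolding rel_le_holds diag_def using kp_rel_holds[OF assms I I] by simp
  have sym: "rel_le C (snd (k1,k2), fst (k1,k2)) (k1,k2)"
    unfolding rel_le_holds using kp_rel_holds[OF assms P(3) P(2)] P(4) by simp
  have trans: "\<forall>Pb p q. pullback C (snd (k1,k2)) (fst (k1,k2)) Pb p q \<longrightarrow>
        rel_le C (Comp C (fst (k1,k2)) p, Comp C (snd (k1,k2)) q) (k1,k2)"
  proof (intro allI impI)
    fix Pb p q assume pb: "pullback C (snd (k1, k2)) (fst (k1, k2)) Pb p q"
    then have pb': "pullback C k2 k1 Pb p q" by simp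
    have Q: "p \<in> hom C Pb K" "q \<in> hom C Pb K" "Comp C k2 p = Comp C k1 q"
      using pb_props[OF pb' P(3) P(2)] by auto
    have x: "Comp C k1 p \<in> hom C Pb W" "Comp C k2 q \<in> hom C Pb W"
      using cat_comp_hom[OF assms(1)] Q P by auto
    have "Comp C g (Comp C k1 p) = Comp C g (Comp C k2 q)"
    proof -
      have "Comp C g (Comp C k1 p) = Comp C (Comp C g k1) p" using cat_assoc[OF assms(1) Q(1) P(2) assms(3)] .
      also have "\<dots> = Comp C (Comp C g k2) p" using P(4) by simp
      also have "\<dots> = Comp C g (Comp C k2 p)" using cat_assoc[OF assms(1) Q(1) P(3) assms(3)] by simp
      also have "\<dots> = Comp C g (Comp C k1 q)" using Q(3) by simp
      also have "\<dots> = Comp C (Comp C g k1) q" using cat_assoc[OF assms(1) Q(2) P(2) assms(3)] .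
      also have "\<dots> = Comp C (Comp C g k2) q" using P(4) by simp
      also have "\<dots> = Comp C g (Comp C k2 q)" using cat_assoc[OF assms(1) Q(2) P(3) assms(3)] by simp
      finally show ?thesis .
    qed
    then show "rel_le C (Comp C (fst (k1, k2)) p, Comp C (snd (k1, k2)) q) (k1, k2)"
      unfolding rel_le_holds using kp_rel_holds[OF assms x] by simp
  qed
  show ?thesis unfolding equiv_rel_def using kp_relation[OF assms] refl sym trans by blast
qed



lemma rel_trans:
  assumes cat: "category C" and fc: "finitely_complete C" and e: "equiv_rel C W e"
    and xyz: "x \<in> hom C Z W" "y \<in> hom C Z W" "z \<in> hom C Z W"
    and r1: "rel_holds C e x y" and r2: "rel_holds C e y z"
  shows "rel_holds C e x z"
proof -
  obtain e1 e2 where ee: "e = (e1,e2)" by (cases e)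
  have rel: "relation C W e" using e unfolding equiv_rel_def by blast
  define E where "E = Dom C e1"
  have eh: "e1 \<in> hom C E W" "e2 \<in> hom C E W" using relation_props[OF rel] ee E_def by auto
  obtain h1 where h1: "h1 \<in> hom C Z E" "Comp C e1 h1 = x" "Comp C e2 h1 = y"
    using r1 xyz ee E_def unfolding rel_holds_def by (auto simp: hom_iff)
  obtain h2 where h2: "h2 \<in> hom C Z E" "Comp C e1 h2 = y" "Comp C e2 h2 = z"
    using r2 xyz ee E_def unfolding rel_holds_def by (auto simp: hom_iff)
  obtain Pb p q where pb: "pullback C e2 e1 Pb p q" using pb_exists[OF fc eh(2) eh(1)] by blast
  have Q: "p \<in> hom C Pb E" "q \<in> hom C Pb E" using pb_props[OF pb eh(2) eh(1)] by auto
  obtain u where u: "u \<in> hom C Z Pb" "Comp C p u = h1" "Comp C q u = h2"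
    using pb_med[OF pb eh(2) eh(1) _ h1(1) h2(1)] hom_obs[OF cat xyz(1)] h1 h2 by auto
  have "rel_le C (Comp C (fst e) p, Comp C (snd e) q) e"
    using e pb ee unfolding equiv_rel_def by auto
  then obtain k where k: "k \<in> hom C Pb E" "Comp C e1 k = Comp C e1 p" "Comp C e2 k = Comp C e2 q"
  proof -
    have "Comp C e1 p \<in> hom C Pb W" using cat_comp_hom[OF cat Q(1) eh(1)] .
    then have "Dom C (Comp C e1 p) = Pb" by (simp add: hom_iff)
    then show ?thesis using that \<open>rel_le C (Comp C (fst e) p, Comp C (snd e) q) e\<close> ee E_def unfolding rel_le_def by auto
  qed
  have ku: "Comp C k u \<in> hom C Z E" using cat_comp_hom[OF cat u(1) k(1)] .
  have "Comp C e1 (Comp C k u) = x"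
    using cat_assoc[OF cat u(1) k(1) eh(1)] cat_assoc[OF cat u(1) Q(1) eh(1)] k u h1 by simp
  moreover have "Comp C e2 (Comp C k u) = z"
    using cat_assoc[OF cat u(1) k(1) eh(2)] cat_assoc[OF cat u(1) Q(2) eh(2)] k u h2 by simp
  ultimately show ?thesis unfolding rel_holds_def using ku ee E_def xyz by (auto simp: hom_iff)
qed

lemma rel_holds_le:
  assumes cat: "category C" and r: "relation C W r" and e: "relation C W e" and le: "rel_le C r e"
    and h: "rel_holds C r x y"
  shows "rel_holds C e x y"
proof -
  obtain h' where h': "h' \<in> hom C (Dom C (fst r)) (Dom C (fst e))" "Comp C (fst e) h' = fst r" "Comp C (snd e) h' = snd r"
    using le unfolding rel_le_def by auto
  obtain g where g: "g \<in> hom C (Dom C x) (Dom C (fst r))" "Comp C (fst r) g = x" "Comp C (snd r) g = y"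
    using h unfolding rel_holds_def by auto
  have E: "fst e \<in> hom C (Dom C (fst e)) W" "snd e \<in> hom C (Dom C (fst e)) W" using relation_props[OF e] by auto
  have c: "Comp C h' g \<in> hom C (Dom C x) (Dom C (fst e))" using cat_comp_hom[OF cat g(1) h'(1)] .
  have "Comp C (fst e) (Comp C h' g) = x" using cat_assoc[OF cat g(1) h'(1) E(1)] h' g by simp
  moreover have "Comp C (snd e) (Comp C h' g) = y" using cat_assoc[OF cat g(1) h'(1) E(2)] h' g by simp
  ultimately show ?thesis unfolding rel_holds_def using c by auto
qed

lemma kp_le_imp:
  assumes cat: "category C" and pb: "pullback C g g K k1 k2" and g: "g \<in> hom C W Y"
    and u: "relation C W u" and le: "rel_le C u (k1,k2)"
  shows "Comp C g (fst u) = Comp C g (snd u)"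
proof -
  have P: "k1 \<in> hom C K W" "k2 \<in> hom C K W" "Comp C g k1 = Comp C g k2" using pb_props[OF pb g g] by auto
  obtain h where h: "h \<in> hom C (Dom C (fst u)) K" "Comp C k1 h = fst u" "Comp C k2 h = snd u"
    using le P unfolding rel_le_def by (auto simp: hom_iff)
  have "Comp C g (fst u) = Comp C (Comp C g k1) h" using cat_assoc[OF cat h(1) P(1) g] h by simp
  also have "\<dots> = Comp C (Comp C g k2) h" using P by simp
  also have "\<dots> = Comp C g (snd u)" using cat_assoc[OF cat h(1) P(2) g] h by simp
  finally show ?thesis .
qed

lemma kp_le:
  assumes cat: "category C" and pb: "pullback C g g K k1 k2" and g: "g \<in> hom C W Y"
    and pb2: "pullback C g' g' K' l1 l2" and g': "g' \<in> hom C W Y'"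
    and eq: "Comp C g' k1 = Comp C g' k2"
  shows "rel_le C (k1,k2) (l1,l2)"
proof -
  have P: "k1 \<in> hom C K W" "k2 \<in> hom C K W" using pb_props[OF pb g g] by auto
  show ?thesis unfolding rel_le_holds using kp_rel_holds[OF cat pb2 g' P eq] by simp
qed

lemma diag_relation:
  assumes cat: "category C" and W: "W \<in> Ob C"
  shows "relation C W (diag C W)"
proof -
  have I: "Id C W \<in> hom C W W" using cat_id_hom[OF cat W] .
  show ?thesis unfolding relation_def diag_def
  proof (intro conjI ballI impI)
    show "W \<in> Ob C" by fact
    show "fst (Id C W, Id C W) \<in> hom C (Dom C (fst (Id C W, Id C W))) W" using I by (simp add: hom_iff)
    show "snd (Id C W, Id C W) \<in> hom C (Dom C (fst (Id C W, Id C W))) W" using I by (simp add: hom_iff)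
    fix a b assume ab: "a \<in> Ar C" "b \<in> Ar C" "Dom C a = Dom C b" "Cod C a = Dom C (fst (Id C W, Id C W))"
      "Cod C b = Dom C (fst (Id C W, Id C W))" "Comp C (fst (Id C W, Id C W)) a = Comp C (fst (Id C W, Id C W)) b"
      "Comp C (snd (Id C W, Id C W)) a = Comp C (snd (Id C W, Id C W)) b"
    have "a \<in> hom C (Dom C a) W" "b \<in> hom C (Dom C b) W" using ab I by (auto simp: hom_iff)
    then show "a = b" using cat_id_l[OF cat] ab by (metis fst_conv)
  qed
qed

lemma meet_diag:
  assumes cat: "category C" and W: "W \<in> Ob C" and t: "equiv_rel C W t" and r: "equiv_rel C W r"
    and H: "\<And>u. relation C W u \<Longrightarrow> rel_le C u t \<Longrightarrow> rel_le C u r \<Longrightarrow> fst u = snd u"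
  shows "rel_meet C W t r (diag C W)"
  unfolding rel_meet_def
proof (intro conjI allI impI)
  show "relation C W (diag C W)" using diag_relation[OF cat W] .
  show "rel_le C (diag C W) t" "rel_le C (diag C W) r" using t r unfolding equiv_rel_def by auto
  fix u assume u: "relation C W u \<and> rel_le C u t \<and> rel_le C u r"
  then have eq: "fst u = snd u" using H by blast
  have U: "fst u \<in> hom C (Dom C (fst u)) W" using relation_props[of C W u] u by blast
  have I: "Dom C (Id C W) = W" using cat_id_hom[OF cat W] by (simp add: hom_iff)
  show "rel_le C u (diag C W)" unfolding rel_le_def diag_def
  proof (rule bexI[of _ "fst u"])
    show "fst u \<in> hom C (Dom C (fst u)) (Dom C (fst (Id C W, Id C W)))" using U I by simp
    show "Comp C (fst (Id C W, Id C W)) (fst u) = fst u \<and> Comp C (snd (Id C W, Id C W)) (fst u) = snd u"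
      using cat_id_l[OF cat U] eq by simp
  qed
qed

lemma meet_diag_D:
  assumes cat: "category C" and m: "rel_meet C W t r (diag C W)" and u: "relation C W u"
    and ut: "rel_le C u t" and ur: "rel_le C u r"
  shows "fst u = snd u"
proof -
  have "rel_le C u (diag C W)" using m u ut ur unfolding rel_meet_def by blast
  then obtain h where "Comp C (Id C W) h = fst u" "Comp C (Id C W) h = snd u"
    unfolding rel_le_def diag_def by auto
  then show ?thesis by simp
qed



lemma wcd_mono:
  assumes wcd: "weakly_cong_distributive C"
  and W: "W \<in> Ob C"
  and a: "a \<in> hom C W Ya" and b: "b \<in> hom C W Yb" and dd: "dd \<in> hom C W Yd" and g: "g \<in> hom C W Yg"
  and H1: "\<And>Z u1 u2. u1 \<in> hom C Z W \<Longrightarrow> u2 \<in> hom C Z W \<Longrightarrow> Comp C a u1 = Comp C a u2 \<Longrightarrow>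
              Comp C dd u1 = Comp C dd u2 \<Longrightarrow> u1 = u2"
  and H2: "\<And>Z u1 u2. u1 \<in> hom C Z W \<Longrightarrow> u2 \<in> hom C Z W \<Longrightarrow> Comp C b u1 = Comp C b u2 \<Longrightarrow>
              Comp C dd u1 = Comp C dd u2 \<Longrightarrow> u1 = u2"
  and H3a: "\<And>Z u1 u2. u1 \<in> hom C Z W \<Longrightarrow> u2 \<in> hom C Z W \<Longrightarrow> Comp C a u1 = Comp C a u2 \<Longrightarrow>
              Comp C g u1 = Comp C g u2"
  and H3b: "\<And>Z u1 u2. u1 \<in> hom C Z W \<Longrightarrow> u2 \<in> hom C Z W \<Longrightarrow> Comp C b u1 = Comp C b u2 \<Longrightarrow>
              Comp C g u1 = Comp C g u2"
  and H3d: "\<And>Z u1 u2. u1 \<in> hom C Z W \<Longrightarrow> u2 \<in> hom C Z W \<Longrightarrow> Comp C dd u1 = Comp C dd u2 \<Longrightarrow>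
              Comp C g u1 = Comp C g u2"
  and H4: "\<And>Z x1 x2. x1 \<in> hom C Z W \<Longrightarrow> x2 \<in> hom C Z W \<Longrightarrow> Comp C g x1 = Comp C g x2 \<Longrightarrow>
              \<exists>c \<in> hom C Z W. Comp C a x1 = Comp C a c \<and> Comp C b c = Comp C b x2"
  and v: "v1 \<in> hom C Z W" "v2 \<in> hom C Z W" "Comp C dd v1 = Comp C dd v2"
  shows "v1 = v2"
proof -
  have fc: "finitely_complete C" using wcd unfolding weakly_cong_distributive_def by blast
  have cat: "category C" using fc unfolding finitely_complete_def by blast
  obtain Ka a1 a2 where pa: "pullback C a a Ka a1 a2" using pb_exists[OF fc a a] by blast
  obtain Kb b1 b2 where pbb: "pullback C b b Kb b1 b2" using pb_exists[OF fc b b] by blast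
  obtain Kt t1 t2 where pt: "pullback C dd dd Kt t1 t2" using pb_exists[OF fc dd dd] by blast
  obtain Kj j1 j2 where pj: "pullback C g g Kj j1 j2" using pb_exists[OF fc g g] by blast
  note Pa = pb_props[OF pa a a] and Pb = pb_props[OF pbb b b] and Pt = pb_props[OF pt dd dd]
    and Pj = pb_props[OF pj g g]
  have Ea: "equiv_rel C W (a1,a2)" using kp_equiv[OF cat pa a] .
  have Eb: "equiv_rel C W (b1,b2)" using kp_equiv[OF cat pbb b] .
  have Et: "equiv_rel C W (t1,t2)" using kp_equiv[OF cat pt dd] .
  have Ej: "equiv_rel C W (j1,j2)" using kp_equiv[OF cat pj g] .
  have Rt: "relation C W (t1,t2)" using kp_relation[OF cat pt dd] .
  have aj: "rel_le C (a1,a2) (j1,j2)" using kp_le[OF cat pa a pj g] H3a[OF Pa(2) Pa(3) Pa(4)] .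
  have bj: "rel_le C (b1,b2) (j1,j2)" using kp_le[OF cat pbb b pj g] H3b[OF Pb(2) Pb(3) Pb(4)] .
  have tj: "rel_le C (t1,t2) (j1,j2)" using kp_le[OF cat pt dd pj g] H3d[OF Pt(2) Pt(3) Pt(4)] .
  have tt: "rel_le C (t1,t2) (t1,t2)" using kp_le[OF cat pt dd pt dd] Pt(4) .
  have sup: "equiv_sup C W (a1,a2) (b1,b2) (j1,j2)"
    unfolding equiv_sup_def
  proof (intro conjI allI impI)
    show "equiv_rel C W (j1,j2)" by fact
    show "rel_le C (a1,a2) (j1,j2)" by fact
    show "rel_le C (b1,b2) (j1,j2)" by fact
    fix e assume e: "equiv_rel C W e \<and> rel_le C (a1, a2) e \<and> rel_le C (b1, b2) e"
    have Re: "relation C W e" using e unfolding equiv_rel_def by blast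
    obtain c where c: "c \<in> hom C Kj W" "Comp C a j1 = Comp C a c" "Comp C b c = Comp C b j2"
      using H4[OF Pj(2) Pj(3) Pj(4)] by blast
    have "rel_holds C (a1,a2) j1 c" using kp_rel_holds[OF cat pa a Pj(2) c(1) c(2)] .
    then have 1: "rel_holds C e j1 c" using rel_holds_le[OF cat kp_relation[OF cat pa a] Re] e by blast
    have "rel_holds C (b1,b2) c j2" using kp_rel_holds[OF cat pbb b c(1) Pj(3) c(3)] .
    then have 2: "rel_holds C e c j2" using rel_holds_le[OF cat kp_relation[OF cat pbb b] Re] e by blast
    have "rel_holds C e j1 j2" using rel_trans[OF cat fc _ Pj(2) c(1) Pj(3) 1 2] e by blast
    then show "rel_le C (j1, j2) e" unfolding rel_le_holds by simp
  qed
  have m1: "rel_meet C W (t1,t2) (a1,a2) (diag C W)"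
  proof (rule meet_diag[OF cat W Et Ea])
    fix u assume u: "relation C W u" "rel_le C u (t1, t2)" "rel_le C u (a1, a2)"
    note U = relation_props[OF u(1)]
    show "fst u = snd u" using H1[OF U(2) U(3) kp_le_imp[OF cat pa a u(1) u(3)] kp_le_imp[OF cat pt dd u(1) u(2)]] .
  qed
  have m2: "rel_meet C W (t1,t2) (b1,b2) (diag C W)"
  proof (rule meet_diag[OF cat W Et Eb])
    fix u assume u: "relation C W u" "rel_le C u (t1, t2)" "rel_le C u (b1, b2)"
    note U = relation_props[OF u(1)]
    show "fst u = snd u" using H2[OF U(2) U(3) kp_le_imp[OF cat pbb b u(1) u(3)] kp_le_imp[OF cat pt dd u(1) u(2)]] .
  qed
  have "\<forall>X\<in>Ob C. \<forall>r s t j. equiv_rel C X r \<and> equiv_rel C X s \<and> equiv_rel C X t \<and>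
        equiv_sup C X r s j \<and> rel_meet C X t r (diag C X) \<and> rel_meet C X t s (diag C X)
        \<longrightarrow> rel_meet C X t j (diag C X)" using wcd unfolding weakly_cong_distributive_def by blast
  then have m: "rel_meet C W (t1,t2) (j1,j2) (diag C W)" using W Ea Eb Et sup m1 m2 by blast
  have "t1 = t2" using meet_diag_D[OF cat m Rt tt tj] by simp
  moreover obtain h where "h \<in> hom C Z Kt" "Comp C t1 h = v1" "Comp C t2 h = v2"
    using kp_related[OF cat pt dd v] by blast
  ultimately show ?thesis by simp
qed



locale am =
  fixes C :: "('o,'a) cat" and X Q q1 q2 q3 p
  assumes cat: "category C" and am: "assoc_maltsev C X Q q1 q2 q3 p"
begin

abbreviation tp where "tp \<equiv> tpairing C Q q1 q2 q3"

lemma tprod: "triple_product C X Q q1 q2 q3" using am unfolding assoc_maltsev_def by blast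
lemma p_hom: "p \<in> hom C Q X" using am unfolding assoc_maltsev_def by blast

lemma tp_props: "Q \<in> Ob C" "q1 \<in> hom C Q X" "q2 \<in> hom C Q X" "q3 \<in> hom C Q X"
  using tprod unfolding triple_product_def by auto

lemma tp_ex1:
  assumes "a \<in> hom C Z X" "b \<in> hom C Z X" "c \<in> hom C Z X"
  shows "\<exists>!u. u \<in> hom C Z Q \<and> Comp C q1 u = a \<and> Comp C q2 u = b \<and> Comp C q3 u = c"
proof -
  have Z: "Z \<in> Ob C" using hom_obs[OF cat assms(1)] by blast
  have "\<forall>Z\<in>Ob C. \<forall>a\<in>hom C Z X. \<forall>b\<in>hom C Z X. \<forall>c\<in>hom C Z X.
        (\<exists>!u. u \<in> hom C Z Q \<and> Comp C q1 u = a \<and> Comp C q2 u = b \<and> Comp C q3 u = c)"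
    using tprod unfolding triple_product_def by (elim conjE) assumption
  then show ?thesis using Z assms by blast
qed

lemma tp_pair:
  assumes "a \<in> hom C Z X" "b \<in> hom C Z X" "c \<in> hom C Z X"
  shows "tp a b c \<in> hom C Z Q" "Comp C q1 (tp a b c) = a" "Comp C q2 (tp a b c) = b" "Comp C q3 (tp a b c) = c"
proof -
  have D: "Dom C a = Z" using assms(1) by (simp add: hom_iff)
  have "tp a b c \<in> hom C Z Q \<and> Comp C q1 (tp a b c) = a \<and> Comp C q2 (tp a b c) = b \<and> Comp C q3 (tp a b c) = c"
    unfolding tpairing_def D by (rule theI'[OF tp_ex1[OF assms]])
  then show "tp a b c \<in> hom C Z Q" "Comp C q1 (tp a b c) = a" "Comp C q2 (tp a b c) = b" "Comp C q3 (tp a b c) = c"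
    by auto
qed

lemma tp_uniq:
  assumes "u \<in> hom C Z Q"
  shows "u = tp (Comp C q1 u) (Comp C q2 u) (Comp C q3 u)"
proof -
  have h: "Comp C q1 u \<in> hom C Z X" "Comp C q2 u \<in> hom C Z X" "Comp C q3 u \<in> hom C Z X"
    using cat_comp_hom[OF cat assms] tp_props by auto
  show ?thesis using tp_ex1[OF h] tp_pair[OF h] assms by blast
qed

lemma tp_ext:
  assumes "u1 \<in> hom C Z Q" "u2 \<in> hom C Z Q" "Comp C q1 u1 = Comp C q1 u2" "Comp C q2 u1 = Comp C q2 u2"
    "Comp C q3 u1 = Comp C q3 u2"
  shows "u1 = u2"
  using tp_uniq[OF assms(1)] tp_uniq[OF assms(2)] assms(3-5) by simp

lemma tp_inj:
  assumes "a \<in> hom C Z X" "b \<in> hom C Z X" "c \<in> hom C Z X"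
    "a' \<in> hom C Z X" "b' \<in> hom C Z X" "c' \<in> hom C Z X" "tp a b c = tp a' b' c'"
  shows "a = a'" "b = b'" "c = c'"
  using tp_pair[OF assms(1-3)] tp_pair[OF assms(4-6)] assms(7) by metis+

lemma tp_nat:
  assumes "h \<in> hom C Z' Z" "a \<in> hom C Z X" "b \<in> hom C Z X" "c \<in> hom C Z X"
  shows "Comp C (tp a b c) h = tp (Comp C a h) (Comp C b h) (Comp C c h)"
proof -
  note T = tp_pair[OF assms(2-4)]
  have "Comp C (tp a b c) h \<in> hom C Z' Q" using cat_comp_hom[OF cat assms(1) T(1)] .
  from tp_uniq[OF this] show ?thesis
    using cat_assoc[OF cat assms(1) T(1)] tp_props T by simp
qed

definition P3 where "P3 a b c = Comp C p (tp a b c)"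

lemma P3_hom: "a \<in> hom C Z X \<Longrightarrow> b \<in> hom C Z X \<Longrightarrow> c \<in> hom C Z X \<Longrightarrow> P3 a b c \<in> hom C Z X"
  unfolding P3_def by (rule cat_comp_hom[OF cat tp_pair(1) p_hom])

lemma P3_nat:
  assumes "h \<in> hom C Z' Z" "a \<in> hom C Z X" "b \<in> hom C Z X" "c \<in> hom C Z X"
  shows "Comp C (P3 a b c) h = P3 (Comp C a h) (Comp C b h) (Comp C c h)"
  unfolding P3_def using cat_assoc[OF cat assms(1) tp_pair(1)[OF assms(2-4)] p_hom] tp_nat[OF assms] by simp

lemma laws:
  assumes "x \<in> hom C Z X" "y \<in> hom C Z X" "z \<in> hom C Z X" "u \<in> hom C Z X" "v \<in> hom C Z X"
  shows "P3 x y y = x" "P3 y y x = x" "P3 x y (P3 z u v) = P3 (P3 x y z) u v"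
proof -
  have Z: "Z \<in> Ob C" using hom_obs[OF cat assms(1)] by blast
  have "\<forall>Z\<in>Ob C. \<forall>x\<in>hom C Z X. \<forall>y\<in>hom C Z X. \<forall>z\<in>hom C Z X. \<forall>u\<in>hom C Z X. \<forall>v\<in>hom C Z X.
        (let P3 = (\<lambda>a b c. Comp C p (tpairing C Q q1 q2 q3 a b c))
         in P3 x y y = x \<and> P3 y y x = x \<and> P3 x y (P3 z u v) = P3 (P3 x y z) u v)"
    using am unfolding assoc_maltsev_def by (elim conjE) assumption
  from this[rule_format, OF Z assms] have "P3 x y y = x \<and> P3 y y x = x \<and> P3 x y (P3 z u v) = P3 (P3 x y z) u v"
    by (simp only: Let_def P3_def)
  then show "P3 x y y = x" "P3 y y x = x" "P3 x y (P3 z u v) = P3 (P3 x y z) u v" by auto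
qed

lemma m1: assumes "x \<in> hom C Z X" "y \<in> hom C Z X" shows "P3 x y y = x" using laws(1)[OF assms assms(2) assms(2) assms(2)] .
lemma m2: assumes "x \<in> hom C Z X" "y \<in> hom C Z X" shows "P3 y y x = x" using laws(2)[OF assms assms(2) assms(2) assms(2)] .
lemma as: assumes "x \<in> hom C Z X" "y \<in> hom C Z X" "z \<in> hom C Z X" "u \<in> hom C Z X" "v \<in> hom C Z X"
  shows "P3 x y (P3 z u v) = P3 (P3 x y z) u v" using laws(3)[OF assms] .

lemma canc: assumes "q \<in> hom C Z X" "a \<in> hom C Z X" "e \<in> hom C Z X" shows "P3 q a (P3 a q e) = e"
proof -
  have "P3 q a (P3 a q e) = P3 (P3 q a a) q e" using as[OF assms(1,2,2,1,3)] .
  also have "\<dots> = P3 q q e" using m1[OF assms(1,2)] by simp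
  also have "\<dots> = e" using m2[OF assms(3,1)] .
  finally show ?thesis .
qed

lemma para:
  assumes h: "a \<in> hom C Z X" "b \<in> hom C Z X" "c \<in> hom C Z X" "d \<in> hom C Z X" "e \<in> hom C Z X"
  shows "P3 a (P3 b c d) e = P3 a d (P3 c b e)"
proof -
  define qq where "qq = P3 b c d"
  have qq: "qq \<in> hom C Z X" unfolding qq_def using P3_hom[OF h(2,3,4)] .
  have R: "P3 a d (P3 c b e) \<in> hom C Z X" using P3_hom[OF h(1,4) P3_hom[OF h(3,2,5)]] .
  have "P3 qq a (P3 a d (P3 c b e)) = P3 (P3 qq a a) d (P3 c b e)" using as[OF qq h(1) h(1) h(4) P3_hom[OF h(3,2,5)]] .
  also have "\<dots> = P3 qq d (P3 c b e)" using m1[OF qq h(1)] by simp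
  also have "\<dots> = P3 b c (P3 d d (P3 c b e))" unfolding qq_def using as[OF h(2,3,4,4) P3_hom[OF h(3,2,5)]] by simp
  also have "\<dots> = P3 b c (P3 c b e)" using m2[OF P3_hom[OF h(3,2,5)] h(4)] by simp
  also have "\<dots> = e" using canc[OF h(2,3,5)] .
  finally have 1: "P3 qq a (P3 a d (P3 c b e)) = e" .
  have "P3 a qq e = P3 a qq (P3 qq a (P3 a d (P3 c b e)))" using 1 by simp
  also have "\<dots> = P3 a d (P3 c b e)" using canc[OF h(1) qq R] .
  finally show ?thesis unfolding qq_def .
qed

lemma id1: "x \<in> hom C Z X \<Longrightarrow> y \<in> hom C Z X \<Longrightarrow> z \<in> hom C Z X \<Longrightarrow> P3 x (P3 y z x) y = z"
proof -
  assume h: "x \<in> hom C Z X" "y \<in> hom C Z X" "z \<in> hom C Z X"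
  have "P3 x (P3 y z x) y = P3 x x (P3 z y y)" using para[OF h(1,2,3,1,2)] .
  also have "\<dots> = P3 z y y" using m2[OF P3_hom[OF h(3,2,2)] h(1)] .
  also have "\<dots> = z" using m1[OF h(3,2)] .
  finally show ?thesis .
qed

lemma id2: "x \<in> hom C Z X \<Longrightarrow> y \<in> hom C Z X \<Longrightarrow> z \<in> hom C Z X \<Longrightarrow> P3 (P3 y z x) x z = y"
proof -
  assume h: "x \<in> hom C Z X" "y \<in> hom C Z X" "z \<in> hom C Z X"
  have "P3 (P3 y z x) x z = P3 y z (P3 x x z)" using as[OF h(2,3,1,1,3)] by simp
  also have "\<dots> = P3 y z z" using m2[OF h(3,1)] by simp
  also have "\<dots> = y" using m1[OF h(2,3)] .
  finally show ?thesis .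
qed

end



context am begin

lemma part2:
  assumes wcd: "weakly_cong_distributive C" and ab: "a \<in> hom C Z X" "b \<in> hom C Z X"
  shows "a = b"
proof -
  note Qp = tp_props
  have pq: "P3 q2 q3 q1 \<in> hom C Q X" using P3_hom[OF Qp(3,4,2)] .
  define r where "r = tp q1 q2 q1"
  define s where "s = tp q1 q1 q3"
  define t where "t = tp q1 (P3 q2 q3 q1) q1"
  define j where "j = tp q1 q1 q1"
  have rh: "r \<in> hom C Q Q" unfolding r_def using tp_pair(1)[OF Qp(2,3,2)] .
  have sh: "s \<in> hom C Q Q" unfolding s_def using tp_pair(1)[OF Qp(2,2,4)] .
  have th: "t \<in> hom C Q Q" unfolding t_def using tp_pair(1)[OF Qp(2) pq Qp(2)] .
  have jh: "j \<in> hom C Q Q" unfolding j_def using tp_pair(1)[OF Qp(2,2,2)] .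
  have cs: "Comp C q1 u \<in> hom C Z' X" "Comp C q2 u \<in> hom C Z' X" "Comp C q3 u \<in> hom C Z' X"
    if "u \<in> hom C Z' Q" for u Z' using cat_comp_hom[OF cat that] Qp by auto
  have rc: "Comp C r u = tp (Comp C q1 u) (Comp C q2 u) (Comp C q1 u)" if "u \<in> hom C Z' Q" for u Z'
    unfolding r_def using tp_nat[OF that Qp(2,3,2)] .
  have sc: "Comp C s u = tp (Comp C q1 u) (Comp C q1 u) (Comp C q3 u)" if "u \<in> hom C Z' Q" for u Z'
    unfolding s_def using tp_nat[OF that Qp(2,2,4)] .
  have jc: "Comp C j u = tp (Comp C q1 u) (Comp C q1 u) (Comp C q1 u)" if "u \<in> hom C Z' Q" for u Z'
    unfolding j_def using tp_nat[OF that Qp(2,2,2)] .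
  have tc: "Comp C t u = tp (Comp C q1 u) (P3 (Comp C q2 u) (Comp C q3 u) (Comp C q1 u)) (Comp C q1 u)"
    if "u \<in> hom C Z' Q" for u Z'
    unfolding t_def using tp_nat[OF that Qp(2) pq Qp(2)] P3_nat[OF that Qp(3,4,2)] by simp
  have ph: "P3 (Comp C q2 u) (Comp C q3 u) (Comp C q1 u) \<in> hom C Z' X" if "u \<in> hom C Z' Q" for u Z'
    using P3_hom[OF cs(2,3,1)[OF that]] .
  have jeq: "Comp C j u1 = Comp C j u2" if "u1 \<in> hom C Z' Q" "u2 \<in> hom C Z' Q"
    "Comp C q1 u1 = Comp C q1 u2" for u1 u2 Z'
    using jc[OF that(1)] jc[OF that(2)] that(3) by simp
  have q1r: "Comp C q1 u1 = Comp C q1 u2 \<and> Comp C q2 u1 = Comp C q2 u2"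
    if "u1 \<in> hom C Z' Q" "u2 \<in> hom C Z' Q" "Comp C r u1 = Comp C r u2" for u1 u2 Z'
    using tp_inj[OF cs(1,2,1)[OF that(1)] cs(1,2,1)[OF that(2)]] rc[OF that(1)] rc[OF that(2)] that(3) by simp
  have q1s: "Comp C q1 u1 = Comp C q1 u2 \<and> Comp C q3 u1 = Comp C q3 u2"
    if "u1 \<in> hom C Z' Q" "u2 \<in> hom C Z' Q" "Comp C s u1 = Comp C s u2" for u1 u2 Z'
    using tp_inj[OF cs(1,1,3)[OF that(1)] cs(1,1,3)[OF that(2)]] sc[OF that(1)] sc[OF that(2)] that(3) by simp
  have q1t: "Comp C q1 u1 = Comp C q1 u2 \<and> P3 (Comp C q2 u1) (Comp C q3 u1) (Comp C q1 u1) =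
      P3 (Comp C q2 u2) (Comp C q3 u2) (Comp C q1 u2)"
    if "u1 \<in> hom C Z' Q" "u2 \<in> hom C Z' Q" "Comp C t u1 = Comp C t u2" for u1 u2 Z'
    using tp_inj[OF cs(1)[OF that(1)] ph[OF that(1)] cs(1)[OF that(1)] cs(1)[OF that(2)] ph[OF that(2)] cs(1)[OF that(2)]]
      tc[OF that(1)] tc[OF that(2)] that(3) by simp
  have main: "v1 = v2" if "v1 \<in> hom C Z' Q" "v2 \<in> hom C Z' Q" "Comp C t v1 = Comp C t v2" for v1 v2 Z'
  proof (rule wcd_mono[OF wcd Qp(1) rh sh th jh _ _ _ _ _ _ that])
    fix Z' u1 u2 assume u: "u1 \<in> hom C Z' Q" "u2 \<in> hom C Z' Q" "Comp C r u1 = Comp C r u2" "Comp C t u1 = Comp C t u2"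
    note A = q1r[OF u(1,2,3)] and B = q1t[OF u(1,2,4)]
    have "Comp C q3 u1 = P3 (Comp C q1 u1) (P3 (Comp C q2 u1) (Comp C q3 u1) (Comp C q1 u1)) (Comp C q2 u1)"
      using id1[OF cs(1,2,3)[OF u(1)]] by simp
    also have "\<dots> = P3 (Comp C q1 u2) (P3 (Comp C q2 u2) (Comp C q3 u2) (Comp C q1 u2)) (Comp C q2 u2)"
      using A B by metis
    also have "\<dots> = Comp C q3 u2" using id1[OF cs(1,2,3)[OF u(2)]] by simp
    finally show "u1 = u2" using tp_ext[OF u(1,2)] A by simp
  next
    fix Z' u1 u2 assume u: "u1 \<in> hom C Z' Q" "u2 \<in> hom C Z' Q" "Comp C s u1 = Comp C s u2" "Comp C t u1 = Comp C t u2"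
    note A = q1s[OF u(1,2,3)] and B = q1t[OF u(1,2,4)]
    have "Comp C q2 u1 = P3 (P3 (Comp C q2 u1) (Comp C q3 u1) (Comp C q1 u1)) (Comp C q1 u1) (Comp C q3 u1)"
      using id2[OF cs(1,2,3)[OF u(1)]] by simp
    also have "\<dots> = P3 (P3 (Comp C q2 u2) (Comp C q3 u2) (Comp C q1 u2)) (Comp C q1 u2) (Comp C q3 u2)"
      using A B by metis
    also have "\<dots> = Comp C q2 u2" using id2[OF cs(1,2,3)[OF u(2)]] by simp
    finally show "u1 = u2" using tp_ext[OF u(1,2)] A by simp
  next
    fix Z' u1 u2 assume u: "u1 \<in> hom C Z' Q" "u2 \<in> hom C Z' Q" "Comp C r u1 = Comp C r u2"
    show "Comp C j u1 = Comp C j u2" using jeq[OF u(1,2)] q1r[OF u] by simp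
  next
    fix Z' u1 u2 assume u: "u1 \<in> hom C Z' Q" "u2 \<in> hom C Z' Q" "Comp C s u1 = Comp C s u2"
    show "Comp C j u1 = Comp C j u2" using jeq[OF u(1,2)] q1s[OF u] by simp
  next
    fix Z' u1 u2 assume u: "u1 \<in> hom C Z' Q" "u2 \<in> hom C Z' Q" "Comp C t u1 = Comp C t u2"
    show "Comp C j u1 = Comp C j u2" using jeq[OF u(1,2)] q1t[OF u] by simp
  next
    fix Z' x1 x2 assume x: "x1 \<in> hom C Z' Q" "x2 \<in> hom C Z' Q" "Comp C j x1 = Comp C j x2"
    have e1: "Comp C q1 x1 = Comp C q1 x2"
      using tp_inj(1)[OF cs(1,1,1)[OF x(1)] cs(1,1,1)[OF x(2)]] jc[OF x(1)] jc[OF x(2)] x(3) by simp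
    define c where "c = tp (Comp C q1 x1) (Comp C q2 x1) (Comp C q3 x2)"
    note cp = tp_pair[OF cs(1,2)[OF x(1)] cs(3)[OF x(2)], folded c_def]
    have "Comp C r x1 = Comp C r c" using rc[OF x(1)] rc[OF cp(1)] cp by simp
    moreover have "Comp C s c = Comp C s x2" using sc[OF x(2)] sc[OF cp(1)] cp e1 by simp
    ultimately show "\<exists>c\<in>hom C Z' Q. Comp C r x1 = Comp C r c \<and> Comp C s c = Comp C s x2"
      using cp(1) by blast
  qed
  have v1: "tp a a a \<in> hom C Z Q" using tp_pair(1)[OF ab(1,1,1)] .
  have v2: "tp a b b \<in> hom C Z Q" using tp_pair(1)[OF ab(1,2,2)] .
  have "Comp C t (tp a a a) = tp a (P3 a a a) a" using tc[OF v1] tp_pair[OF ab(1,1,1)] by simp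
  also have "\<dots> = tp a a a" using m1[OF ab(1,1)] by simp
  also have "\<dots> = tp a (P3 b b a) a" using m2[OF ab(1,2)] by simp
  also have "\<dots> = Comp C t (tp a b b)" using tc[OF v2] tp_pair[OF ab(1,2,2)] by simp
  finally have "tp a a a = tp a b b" using main[OF v1 v2] by blast
  then show ?thesis using tp_inj(2)[OF ab(1,1,1) ab(1,2,2)] by blast
qed

end


lemma pt_Ob: "a \<in> Ob (pt_cat C X) \<longleftrightarrow> fst a \<in> Ob C \<and> fst (snd a) \<in> hom C (fst a) X \<and>
   snd (snd a) \<in> hom C X (fst a) \<and> Comp C (fst (snd a)) (snd (snd a)) = Id C X"
  by (cases a) (simp add: pt_cat_def)

lemma pt_hom_triple: "(a',b',h) \<in> hom (pt_cat C X) a b \<longleftrightarrow> a' = a \<and> b' = b \<and> a \<in> Ob (pt_cat C X) \<and> b \<in> Ob (pt_cat C X) \<and>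
   h \<in> hom C (fst a) (fst b) \<and> Comp C (fst (snd b)) h = fst (snd a) \<and> Comp C h (snd (snd a)) = snd (snd b)"
proof -
  have O: "Ob (pt_cat C X) = {(A,f,s). A \<in> Ob C \<and> f \<in> hom C A X \<and> s \<in> hom C X A \<and> Comp C f s = Id C X}"
    by (simp add: pt_cat_def)
  have "(a',b',h) \<in> Ar (pt_cat C X) \<longleftrightarrow> a' \<in> Ob (pt_cat C X) \<and> b' \<in> Ob (pt_cat C X) \<and>
     h \<in> hom C (fst a') (fst b') \<and> Comp C (fst (snd b')) h = fst (snd a') \<and> Comp C h (snd (snd a')) = snd (snd b')"
    unfolding O by (simp add: pt_cat_def)
  moreover have "Dom (pt_cat C X) (a',b',h) = a'" "Cod (pt_cat C X) (a',b',h) = b'" by (simp_all add: pt_cat_def)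
  ultimately show ?thesis unfolding hom_iff by auto
qed

lemma pt_hom_form: "\<phi> \<in> hom (pt_cat C X) a b \<Longrightarrow> \<phi> = (a, b, snd (snd \<phi>))"
  by (cases \<phi>) (simp add: pt_hom_triple)

lemma pt_hom: "\<phi> \<in> hom (pt_cat C X) a b \<longleftrightarrow> \<phi> = (a, b, snd (snd \<phi>)) \<and> a \<in> Ob (pt_cat C X) \<and> b \<in> Ob (pt_cat C X) \<and>
   snd (snd \<phi>) \<in> hom C (fst a) (fst b) \<and> Comp C (fst (snd b)) (snd (snd \<phi>)) = fst (snd a) \<and>
   Comp C (snd (snd \<phi>)) (snd (snd a)) = snd (snd b)"
  by (cases \<phi>) (auto simp add: pt_hom_triple)

lemma pt_comp: "Comp (pt_cat C X) (b,c,k) (a,b',h) = (a,c,Comp C k h)"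
  by (simp add: pt_cat_def)

lemma pt_Id: "Id (pt_cat C X) a = (a,a,Id C (fst a))"
  by (simp add: pt_cat_def)



locale ig =
  fixes C :: "('o,'a) cat" and X A f s T P p1 p2 m e i
  assumes cat: "category C" and ig: "internal_group (pt_cat C X) (A,f,s) T P p1 p2 m e i"
begin

abbreviation PT where "PT \<equiv> pt_cat C X"
abbreviation G where "G \<equiv> (A,f,s)"

lemma ptcat: "category PT" using ig unfolding internal_group_def by blast
lemma G_ob: "G \<in> Ob PT" using ig unfolding internal_group_def by blast
lemma prod: "product PT G G P p1 p2" using ig unfolding internal_group_def by blast
lemma T_term: "terminal PT T" using ig unfolding internal_group_def by blast
lemma m_hom: "m \<in> hom PT P G" using ig unfolding internal_group_def by blast
lemma e_hom: "e \<in> hom PT T G" using ig unfolding internal_group_def by blast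
lemma i_hom: "i \<in> hom PT G G" using ig unfolding internal_group_def by blast
lemma p_homs: "p1 \<in> hom PT P G" "p2 \<in> hom PT P G" using prod unfolding product_def by auto

definition pr where "pr a b = pairing PT P p1 p2 a b"
definition mul where "mul a b = Comp PT m (pr a b)"
definition un where "un Z = Comp PT e (bang PT T Z)"

lemma pr_ex1:
  assumes "a \<in> hom PT Z G" "b \<in> hom PT Z G"
  shows "\<exists>!u. u \<in> hom PT Z P \<and> Comp PT p1 u = a \<and> Comp PT p2 u = b"
proof -
  have Z: "Z \<in> Ob PT" using hom_obs[OF ptcat assms(1)] by blast
  have "\<forall>Z\<in>Ob PT. \<forall>a\<in>hom PT Z G. \<forall>b\<in>hom PT Z G.
        (\<exists>!u. u \<in> hom PT Z P \<and> Comp PT p1 u = a \<and> Comp PT p2 u = b)"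
    using prod unfolding product_def by (elim conjE) assumption
  from this[rule_format, OF Z assms] show ?thesis .
qed

lemma pr_props:
  assumes "a \<in> hom PT Z G" "b \<in> hom PT Z G"
  shows "pr a b \<in> hom PT Z P" "Comp PT p1 (pr a b) = a" "Comp PT p2 (pr a b) = b"
proof -
  have D: "Dom PT a = Z" using assms(1) by (simp add: hom_iff)
  have "pr a b \<in> hom PT Z P \<and> Comp PT p1 (pr a b) = a \<and> Comp PT p2 (pr a b) = b"
    unfolding pr_def pairing_def D by (rule theI'[OF pr_ex1[OF assms]])
  then show "pr a b \<in> hom PT Z P" "Comp PT p1 (pr a b) = a" "Comp PT p2 (pr a b) = b" by auto
qed

lemma pr_uniq:
  assumes "a \<in> hom PT Z G" "b \<in> hom PT Z G" "u \<in> hom PT Z P" "Comp PT p1 u = a" "Comp PT p2 u = b"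
  shows "u = pr a b"
  using pr_ex1[OF assms(1,2)] pr_props[OF assms(1,2)] assms(3-5) by blast

lemma bang_hom: assumes "Z \<in> Ob PT" shows "bang PT T Z \<in> hom PT Z T"
proof -
  have "\<exists>!f. f \<in> hom PT Z T" using T_term assms unfolding terminal_def by blast
  then show ?thesis unfolding bang_def by (rule theI')
qed

lemma mul_hom: "a \<in> hom PT Z G \<Longrightarrow> b \<in> hom PT Z G \<Longrightarrow> mul a b \<in> hom PT Z G"
  unfolding mul_def by (rule cat_comp_hom[OF ptcat pr_props(1) m_hom])

lemma un_hom: "Z \<in> Ob PT \<Longrightarrow> un Z \<in> hom PT Z G"
  unfolding un_def by (rule cat_comp_hom[OF ptcat bang_hom e_hom])

lemma inv_hom: "a \<in> hom PT Z G \<Longrightarrow> Comp PT i a \<in> hom PT Z G"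
  by (rule cat_comp_hom[OF ptcat _ i_hom])

lemma glaws:
  assumes "x \<in> hom PT Z G" "y \<in> hom PT Z G" "z \<in> hom PT Z G"
  shows "mul (mul x y) z = mul x (mul y z)" "mul (un Z) x = x" "mul x (un Z) = x"
    "mul x (Comp PT i x) = un Z" "mul (Comp PT i x) x = un Z"
proof -
  have Z: "Z \<in> Ob PT" using hom_obs[OF ptcat assms(1)] by blast
  have "\<forall>Z\<in>Ob PT. \<forall>x\<in>hom PT Z G. \<forall>y\<in>hom PT Z G. \<forall>z\<in>hom PT Z G.
        (let mul = (\<lambda>a b. Comp PT m (pairing PT P p1 p2 a b));
             u = Comp PT e (bang PT T Z)
         in mul (mul x y) z = mul x (mul y z) \<and>
            mul u x = x \<and> mul x u = x \<and>
            mul x (Comp PT i x) = u \<and> mul (Comp PT i x) x = u)"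
    using ig unfolding internal_group_def by (elim conjE) assumption
  from this[rule_format, OF Z assms] have
    "mul (mul x y) z = mul x (mul y z) \<and> mul (un Z) x = x \<and> mul x (un Z) = x \<and>
     mul x (Comp PT i x) = un Z \<and> mul (Comp PT i x) x = un Z"
    by (simp only: Let_def mul_def pr_def un_def)
  then show "mul (mul x y) z = mul x (mul y z)" "mul (un Z) x = x" "mul x (un Z) = x"
    "mul x (Comp PT i x) = un Z" "mul (Comp PT i x) x = un Z" by auto
qed

lemma mul_nat:
  assumes h: "h \<in> hom PT Z' Z" and ab: "a \<in> hom PT Z G" "b \<in> hom PT Z G"
  shows "Comp PT (mul a b) h = mul (Comp PT a h) (Comp PT b h)"
proof -
  note pp = pr_props[OF ab]
  have ah: "Comp PT a h \<in> hom PT Z' G" "Comp PT b h \<in> hom PT Z' G"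
    using cat_comp_hom[OF ptcat h] ab by auto
  have c: "Comp PT (pr a b) h \<in> hom PT Z' P" using cat_comp_hom[OF ptcat h pp(1)] .
  have "Comp PT p1 (Comp PT (pr a b) h) = Comp PT a h"
    using cat_assoc[OF ptcat h pp(1) p_homs(1)] pp by simp
  moreover have "Comp PT p2 (Comp PT (pr a b) h) = Comp PT b h"
    using cat_assoc[OF ptcat h pp(1) p_homs(2)] pp by simp
  ultimately have "Comp PT (pr a b) h = pr (Comp PT a h) (Comp PT b h)"
    using pr_uniq[OF ah c] by blast
  then show ?thesis unfolding mul_def using cat_assoc[OF ptcat h pp(1) m_hom] by simp
qed

end


context ig begin

lemma part1:
  assumes wcd: "weakly_cong_distributive C"
  shows "iso C f"
proof -
  have fc: "finitely_complete C" using wcd unfolding weakly_cong_distributive_def by blast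
  have Gf: "A \<in> Ob C" "f \<in> hom C A X" "s \<in> hom C X A" "Comp C f s = Id C X"
    using G_ob by (simp_all add: pt_Ob)
  have Xo: "X \<in> Ob C" using hom_obs[OF cat Gf(2)] by blast
  obtain W w1 w2 where pb: "pullback C f f W w1 w2" using pb_exists[OF fc Gf(2) Gf(2)] by blast
  note PW = pb_props[OF pb Gf(2) Gf(2)]
  obtain \<sigma> where sg: "\<sigma> \<in> hom C X W" "Comp C w1 \<sigma> = s" "Comp C w2 \<sigma> = s"
    using pb_med[OF pb Gf(2) Gf(2) Xo Gf(3) Gf(3)] by blast
  define gW where "gW = Comp C f w1"
  have gWh: "gW \<in> hom C W X" unfolding gW_def using cat_comp_hom[OF cat PW(2) Gf(2)] .
  have gW2: "gW = Comp C f w2" unfolding gW_def using PW(4) .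
  have gWs: "Comp C gW \<sigma> = Id C X"
    unfolding gW_def using cat_assoc[OF cat sg(1) PW(2) Gf(2)] sg Gf(4) by simp
  define Wp where "Wp = (W, gW, \<sigma>)"
  have Wp_ob: "Wp \<in> Ob PT" unfolding Wp_def using PW(1) gWh sg(1) gWs by (simp add: pt_Ob)
  have pa: "\<alpha> = (Wp, G, snd (snd \<alpha>)) \<and> snd (snd \<alpha>) \<in> hom C W A \<and> Comp C f (snd (snd \<alpha>)) = gW
      \<and> Comp C (snd (snd \<alpha>)) \<sigma> = s" if "\<alpha> \<in> hom PT Wp G" for \<alpha>
    using that unfolding pt_hom[of \<alpha>] Wp_def by auto
  have xP: "(Wp, G, w1) \<in> hom PT Wp G" using Wp_ob G_ob PW(2) sg(2)
    unfolding pt_hom_triple by (simp add: Wp_def gW_def)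
  have yP: "(Wp, G, w2) \<in> hom PT Wp G" using Wp_ob G_ob PW(3) sg(3)
    unfolding pt_hom_triple by (simp add: Wp_def gW2)
  define xx where "xx = (Wp, G, w1)"
  define yy where "yy = (Wp, G, w2)"
  note xP = xP[folded xx_def] and yP = yP[folded yy_def]
  define iy where "iy = Comp PT i yy"
  have iyh: "iy \<in> hom PT Wp G" unfolding iy_def using inv_hom[OF yP] .
  define D where "D = mul xx iy"
  have Dh: "D \<in> hom PT Wp G" unfolding D_def using mul_hom[OF xP iyh] .
  define D0 where "D0 = snd (snd D)"
  note Dp = pa[OF Dh, folded D0_def]
  define I where "I = Comp PT i D"
  have Ih: "I \<in> hom PT Wp G" unfolding I_def using inv_hom[OF Dh] .
  have Wo: "Wp \<in> Ob PT" by (rule Wp_ob)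
  have e1: "mul D yy = xx"
    unfolding D_def iy_def using glaws(1)[OF xP iyh yP] glaws(5)[OF yP yP yP] glaws(3)[OF xP xP xP]
    by (simp add: iy_def)
  have e2: "mul I xx = yy"
  proof -
    have "mul I xx = mul I (mul D yy)" using e1 by simp
    also have "\<dots> = mul (mul I D) yy" using glaws(1)[OF Ih Dh yP] by simp
    also have "\<dots> = yy" unfolding I_def using glaws(5)[OF Dh Dh Dh] glaws(2)[OF yP yP yP] by simp
    finally show ?thesis .
  qed
  define \<psi> where "\<psi> = pr xx yy"
  have \<psi>h: "\<psi> \<in> hom PT Wp P" unfolding \<psi>_def using pr_props(1)[OF xP yP] .
  have \<psi>1: "Comp PT p1 \<psi> = xx" "Comp PT p2 \<psi> = yy" unfolding \<psi>_def using pr_props[OF xP yP] by auto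
  define \<psi>0 where "\<psi>0 = snd (snd \<psi>)"
  define m0 where "m0 = snd (snd m)"
  have \<psi>f: "\<psi> = (Wp, P, \<psi>0)" unfolding \<psi>0_def using pt_hom_form[OF \<psi>h] .
  have mf: "m = (P, G, m0)" unfolding m0_def using pt_hom_form[OF m_hom] .
  have \<psi>0h: "\<psi>0 \<in> hom C W (fst P)" using \<psi>h unfolding pt_hom[of \<psi>] \<psi>0_def Wp_def by auto
  have m0h: "m0 \<in> hom C (fst P) A" using m_hom unfolding pt_hom[of m] m0_def by auto
  define N where "N = Comp C m0 \<psi>0"
  have Nh: "N \<in> hom C W A" unfolding N_def using cat_comp_hom[OF cat \<psi>0h m0h] .
  have transport: "snd (snd (mul \<alpha> \<beta>)) = Comp C N k0"
    if ab: "\<alpha> \<in> hom PT Wp G" "\<beta> \<in> hom PT Wp G" and k: "k0 \<in> hom C W W"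
      "Comp C w1 k0 = snd (snd \<alpha>)" "Comp C w2 k0 = snd (snd \<beta>)" for \<alpha> \<beta> k0
  proof -
    note A1 = pa[OF ab(1)] and B1 = pa[OF ab(2)]
    have gk: "Comp C gW k0 = gW"
    proof -
      have "Comp C gW k0 = Comp C f (Comp C w1 k0)" unfolding gW_def using cat_assoc[OF cat k(1) PW(2) Gf(2)] by simp
      also have "\<dots> = gW" using k(2) A1 by simp
      finally show ?thesis .
    qed
    have ks: "Comp C k0 \<sigma> = \<sigma>"
    proof (rule pb_uniq[OF cat pb Gf(2) Gf(2) cat_comp_hom[OF cat sg(1) k(1)] sg(1)])
      show "Comp C w1 (Comp C k0 \<sigma>) = Comp C w1 \<sigma>" using cat_assoc[OF cat sg(1) k(1) PW(2)] k(2) A1 sg by simp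
      show "Comp C w2 (Comp C k0 \<sigma>) = Comp C w2 \<sigma>" using cat_assoc[OF cat sg(1) k(1) PW(3)] k(3) B1 sg by simp
    qed
    have \<kappa>: "(Wp, Wp, k0) \<in> hom PT Wp Wp" using Wo k(1) gk ks unfolding pt_hom_triple by (simp add: Wp_def)
    have c: "Comp PT \<psi> (Wp, Wp, k0) \<in> hom PT Wp P" using cat_comp_hom[OF ptcat \<kappa> \<psi>h] .
    have "Comp PT p1 (Comp PT \<psi> (Wp, Wp, k0)) = Comp PT xx (Wp, Wp, k0)"
      using cat_assoc[OF ptcat \<kappa> \<psi>h p_homs(1)] \<psi>1 by simp
    also have "\<dots> = \<alpha>" unfolding xx_def pt_comp using k(2) A1 by simp
    finally have 1: "Comp PT p1 (Comp PT \<psi> (Wp, Wp, k0)) = \<alpha>" .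
    have "Comp PT p2 (Comp PT \<psi> (Wp, Wp, k0)) = Comp PT yy (Wp, Wp, k0)"
      using cat_assoc[OF ptcat \<kappa> \<psi>h p_homs(2)] \<psi>1 by simp
    also have "\<dots> = \<beta>" unfolding yy_def pt_comp using k(3) B1 by simp
    finally have 2: "Comp PT p2 (Comp PT \<psi> (Wp, Wp, k0)) = \<beta>" .
    have "pr \<alpha> \<beta> = Comp PT \<psi> (Wp, Wp, k0)" using pr_uniq[OF ab c 1 2] by simp
    then have pr_eq: "pr \<alpha> \<beta> = (Wp, P, Comp C \<psi>0 k0)" unfolding \<psi>f pt_comp .
    have "mul \<alpha> \<beta> = Comp PT m (pr \<alpha> \<beta>)" by (rule mul_def)
    also have "\<dots> = Comp PT (P, G, m0) (Wp, P, Comp C \<psi>0 k0)" using pr_eq mf by simp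
    finally have "mul \<alpha> \<beta> = (Wp, G, Comp C m0 (Comp C \<psi>0 k0))" unfolding pt_comp .
    then show ?thesis unfolding N_def using cat_assoc[OF cat k(1) \<psi>0h m0h] by simp
  qed
  define i0 where "i0 = snd (snd i)"
  have i_f: "i = (G, G, i0)" unfolding i0_def using pt_hom_form[OF i_hom] .
  have I0: "snd (snd I) = Comp C i0 D0" unfolding I_def i_f using Dp by (metis pt_comp snd_conv)
  have i0h: "i0 \<in> hom C A A" using i_hom unfolding pt_hom[of i] i0_def by auto
  note Ip = pa[OF Ih]
  have H1: "u1 = u2" if u: "u1 \<in> hom C Z' W" "u2 \<in> hom C Z' W" "Comp C w1 u1 = Comp C w1 u2"
    "Comp C D0 u1 = Comp C D0 u2" for Z' u1 u2
  proof -
    have Z': "Z' \<in> Ob C" using hom_obs[OF cat u(1)] by blast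
    obtain k0 where k: "k0 \<in> hom C W W" "Comp C w1 k0 = snd (snd I)" "Comp C w2 k0 = w1"
      using pb_med[OF pb Gf(2) Gf(2) PW(1) Ip[THEN conjunct2, THEN conjunct1] PW(2)] Ip gW_def by auto
    have w2N: "w2 = Comp C N k0" using transport[OF Ih xP k(1) k(2)] k(3) e2 by (simp add: xx_def yy_def)
    have ku: "Comp C k0 u1 = Comp C k0 u2"
    proof (rule pb_uniq[OF cat pb Gf(2) Gf(2) cat_comp_hom[OF cat u(1) k(1)] cat_comp_hom[OF cat u(2) k(1)]])
      show "Comp C w1 (Comp C k0 u1) = Comp C w1 (Comp C k0 u2)"
        using cat_assoc[OF cat u(1) k(1) PW(2)] cat_assoc[OF cat u(2) k(1) PW(2)] k(2) I0
          cat_assoc[OF cat u(1) Dp[THEN conjunct2, THEN conjunct1] i0h] cat_assoc[OF cat u(2) Dp[THEN conjunct2, THEN conjunct1] i0h] u(4)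
        by simp
      show "Comp C w2 (Comp C k0 u1) = Comp C w2 (Comp C k0 u2)"
        using cat_assoc[OF cat u(1) k(1) PW(3)] cat_assoc[OF cat u(2) k(1) PW(3)] k(3) u(3) by simp
    qed
    have "Comp C w2 u1 = Comp C w2 u2"
      using w2N cat_assoc[OF cat u(1) k(1) Nh] cat_assoc[OF cat u(2) k(1) Nh] ku by simp
    then show ?thesis using pb_uniq[OF cat pb Gf(2) Gf(2) u(1,2) u(3)] by simp
  qed
  have H2: "u1 = u2" if u: "u1 \<in> hom C Z' W" "u2 \<in> hom C Z' W" "Comp C w2 u1 = Comp C w2 u2"
    "Comp C D0 u1 = Comp C D0 u2" for Z' u1 u2
  proof -
    obtain k0 where k: "k0 \<in> hom C W W" "Comp C w1 k0 = D0" "Comp C w2 k0 = w2"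
      using pb_med[OF pb Gf(2) Gf(2) PW(1) Dp[THEN conjunct2, THEN conjunct1] PW(3)] Dp gW2 by auto
    have w1N: "w1 = Comp C N k0" using transport[OF Dh yP k(1)] k e1 D0_def by (simp add: xx_def yy_def)
    have ku: "Comp C k0 u1 = Comp C k0 u2"
    proof (rule pb_uniq[OF cat pb Gf(2) Gf(2) cat_comp_hom[OF cat u(1) k(1)] cat_comp_hom[OF cat u(2) k(1)]])
      show "Comp C w1 (Comp C k0 u1) = Comp C w1 (Comp C k0 u2)"
        using cat_assoc[OF cat u(1) k(1) PW(2)] cat_assoc[OF cat u(2) k(1) PW(2)] k(2) u(4) by simp
      show "Comp C w2 (Comp C k0 u1) = Comp C w2 (Comp C k0 u2)"
        using cat_assoc[OF cat u(1) k(1) PW(3)] cat_assoc[OF cat u(2) k(1) PW(3)] k(3) u(3) by simp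
    qed
    have "Comp C w1 u1 = Comp C w1 u2"
      using w1N cat_assoc[OF cat u(1) k(1) Nh] cat_assoc[OF cat u(2) k(1) Nh] ku by simp
    then show ?thesis using pb_uniq[OF cat pb Gf(2) Gf(2) u(1,2) _ u(3)] by simp
  qed
  have H3: "Comp C gW u1 = Comp C gW u2" if u: "u1 \<in> hom C Z' W" "u2 \<in> hom C Z' W"
    "Comp C w u1 = Comp C w u2" "w \<in> hom C W A" "gW = Comp C f w" for Z' u1 u2 w
    using cat_assoc[OF cat u(1) u(4) Gf(2)] cat_assoc[OF cat u(2) u(4) Gf(2)] u(3,5) by simp
  have H4: "\<exists>c \<in> hom C Z' W. Comp C w1 x1 = Comp C w1 c \<and> Comp C w2 c = Comp C w2 x2"
    if x: "x1 \<in> hom C Z' W" "x2 \<in> hom C Z' W" "Comp C gW x1 = Comp C gW x2" for Z' x1 x2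
  proof -
    have Z': "Z' \<in> Ob C" using hom_obs[OF cat x(1)] by blast
    have "Comp C f (Comp C w1 x1) = Comp C f (Comp C w2 x2)"
      using cat_assoc[OF cat x(1) PW(2) Gf(2)] cat_assoc[OF cat x(2) PW(2) Gf(2)] cat_assoc[OF cat x(2) PW(3) Gf(2)]
        x(3) gW_def PW(4) by simp
    then obtain c where c: "c \<in> hom C Z' W" "Comp C w1 c = Comp C w1 x1" "Comp C w2 c = Comp C w2 x2"
      using pb_med[OF pb Gf(2) Gf(2) Z' cat_comp_hom[OF cat x(1) PW(2)] cat_comp_hom[OF cat x(2) PW(3)]] by blast
    show ?thesis
    proof (rule bexI[of _ c])
      show "c \<in> hom C Z' W" by (rule c(1))
      show "Comp C w1 x1 = Comp C w1 c \<and> Comp C w2 c = Comp C w2 x2" using c(2,3) by simp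
    qed
  qed
  have D0mono: "v1 = v2" if v: "v1 \<in> hom C Z' W" "v2 \<in> hom C Z' W" "Comp C D0 v1 = Comp C D0 v2" for Z' v1 v2
  proof -
    have gD: "gW = Comp C f D0" using Dp by simp
    show ?thesis
      by (rule wcd_mono[OF wcd PW(1) PW(2) PW(3) Dp[THEN conjunct2, THEN conjunct1] gWh H1 H2
          H3[OF _ _ _ PW(2) gW_def] H3[OF _ _ _ PW(3) gW2] H3[OF _ _ _ Dp[THEN conjunct2, THEN conjunct1] gD] H4 v])
  qed
  obtain \<delta>0 where d0: "\<delta>0 \<in> hom C A W" "Comp C w1 \<delta>0 = Id C A" "Comp C w2 \<delta>0 = Id C A"
    using pb_med[OF pb Gf(2) Gf(2) Gf(1) cat_id_hom[OF cat Gf(1)] cat_id_hom[OF cat Gf(1)]] by blast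
  define \<epsilon>0 where "\<epsilon>0 = Comp C \<sigma> f"
  have e0h: "\<epsilon>0 \<in> hom C A W" unfolding \<epsilon>0_def using cat_comp_hom[OF cat Gf(2) sg(1)] .
  have d0s: "Comp C \<delta>0 s = \<sigma>"
  proof (rule pb_uniq[OF cat pb Gf(2) Gf(2) cat_comp_hom[OF cat Gf(3) d0(1)] sg(1)])
    show "Comp C w1 (Comp C \<delta>0 s) = Comp C w1 \<sigma>" using cat_assoc[OF cat Gf(3) d0(1) PW(2)] d0 sg cat_id_l[OF cat Gf(3)] by simp
    show "Comp C w2 (Comp C \<delta>0 s) = Comp C w2 \<sigma>" using cat_assoc[OF cat Gf(3) d0(1) PW(3)] d0 sg cat_id_l[OF cat Gf(3)] by simp
  qed
  have gd: "Comp C gW \<delta>0 = f" unfolding gW_def using cat_assoc[OF cat d0(1) PW(2) Gf(2)] d0 cat_id_r[OF cat Gf(2)] by simp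
  have \<delta>: "(G, Wp, \<delta>0) \<in> hom PT G Wp" using G_ob Wo d0(1) gd d0s unfolding pt_hom_triple by (simp add: Wp_def)
  have ge: "Comp C gW \<epsilon>0 = f" unfolding \<epsilon>0_def using cat_assoc[OF cat Gf(2) sg(1) gWh] gWs cat_id_l[OF cat Gf(2)] by simp
  have es: "Comp C \<epsilon>0 s = \<sigma>" unfolding \<epsilon>0_def using cat_assoc[OF cat Gf(3) Gf(2) sg(1)] Gf(4) cat_id_r[OF cat sg(1)] by simp
  have \<epsilon>: "(G, Wp, \<epsilon>0) \<in> hom PT G Wp" using G_ob Wo e0h ge es unfolding pt_hom_triple by (simp add: Wp_def)
  have IdG: "Id PT G \<in> hom PT G G" using cat_id_hom[OF ptcat G_ob] .
  have xd: "Comp PT xx (G, Wp, \<delta>0) = Id PT G" unfolding xx_def pt_comp pt_Id using d0 by simp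
  have yd: "Comp PT yy (G, Wp, \<delta>0) = Id PT G" unfolding yy_def pt_comp pt_Id using d0 by simp
  have "Comp PT D (G, Wp, \<delta>0) = mul (Comp PT xx (G, Wp, \<delta>0)) (Comp PT iy (G, Wp, \<delta>0))"
    unfolding D_def using mul_nat[OF \<delta> xP iyh] .
  also have "\<dots> = mul (Id PT G) (Comp PT i (Id PT G))"
    using xd yd cat_assoc[OF ptcat \<delta> yP i_hom] by (simp add: iy_def)
  also have "\<dots> = un G" using glaws(4)[OF IdG IdG IdG] .
  finally have Dd: "Comp PT D (G, Wp, \<delta>0) = un G" .
  define sfP where "sfP = (G, G, Comp C s f)"
  have xe: "Comp PT xx (G, Wp, \<epsilon>0) = sfP" unfolding xx_def pt_comp sfP_def \<epsilon>0_def
    using cat_assoc[OF cat Gf(2) sg(1) PW(2)] sg by simp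
  have ye: "Comp PT yy (G, Wp, \<epsilon>0) = sfP" unfolding yy_def pt_comp sfP_def \<epsilon>0_def
    using cat_assoc[OF cat Gf(2) sg(1) PW(3)] sg by simp
  have sfh: "sfP \<in> hom PT G G" using cat_comp_hom[OF ptcat \<epsilon> xP] xe by simp
  have "Comp PT D (G, Wp, \<epsilon>0) = mul (Comp PT xx (G, Wp, \<epsilon>0)) (Comp PT iy (G, Wp, \<epsilon>0))"
    unfolding D_def using mul_nat[OF \<epsilon> xP iyh] .
  also have "\<dots> = mul sfP (Comp PT i sfP)"
    using xe ye cat_assoc[OF ptcat \<epsilon> yP i_hom] by (simp add: iy_def)
  also have "\<dots> = un G" using glaws(4)[OF sfh sfh sfh] .
  finally have De: "Comp PT D (G, Wp, \<epsilon>0) = un G" .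
  have Df: "D = (Wp, G, D0)" using Dp by simp
  have "(G, G, Comp C D0 \<delta>0) = (G, G, Comp C D0 \<epsilon>0)"
    using Dd De unfolding Df pt_comp by (rule trans[OF _ sym])
  then have "Comp C D0 \<delta>0 = Comp C D0 \<epsilon>0" by simp
  then have "\<delta>0 = \<epsilon>0" using D0mono[OF d0(1) e0h] by simp
  then have sf: "Comp C s f = Id C A"
    using d0(2) cat_assoc[OF cat Gf(2) sg(1) PW(2)] sg(2) unfolding \<epsilon>0_def by simp
  show ?thesis unfolding iso_def
    using Gf(2,3,4) sf by (auto simp: hom_iff)
qed

end

theorem mainTheorem11:
  fixes C :: "('o,'a) cat"
  assumes "weakly_cong_distributive C"
  shows "(\<forall>X\<in>Ob C. \<forall>A f s T P p1 p2 m e i.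
            internal_group (pt_cat C X) (A,f,s) T P p1 p2 m e i \<longrightarrow> iso C f)
       \<and> (\<forall>X\<in>Ob C. \<forall>Q q1 q2 q3 p. assoc_maltsev C X Q q1 q2 q3 p \<longrightarrow>
            (\<forall>T. terminal C T \<longrightarrow> mono C (bang C T X)))"
proof -
  have fc: "finitely_complete C" using assms unfolding weakly_cong_distributive_def by blast
  have cat: "category C" using fc unfolding finitely_complete_def by blast
  have 1: "\<forall>X\<in>Ob C. \<forall>A f s T P p1 p2 m e i.
            internal_group (pt_cat C X) (A,f,s) T P p1 p2 m e i \<longrightarrow> iso C f"
  proof (intro ballI allI impI)
    fix X A f s T P p1 p2 m e i
    assume h: "internal_group (pt_cat C X) (A,f,s) T P p1 p2 m e i"
    show "iso C f" using ig.part1[OF ig.intro[OF cat h] assms] .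
  qed
  have 2: "\<forall>X\<in>Ob C. \<forall>Q q1 q2 q3 p. assoc_maltsev C X Q q1 q2 q3 p \<longrightarrow>
            (\<forall>T. terminal C T \<longrightarrow> mono C (bang C T X))"
  proof (intro ballI allI impI)
    fix X Q q1 q2 q3 p T
    assume X: "X \<in> Ob C" and h: "assoc_maltsev C X Q q1 q2 q3 p" and t: "terminal C T"
    have "\<exists>!g. g \<in> hom C X T" using t X unfolding terminal_def by blast
    then have bh: "bang C T X \<in> hom C X T" unfolding bang_def by (rule theI')
    show "mono C (bang C T X)" unfolding mono_def
    proof (intro conjI ballI impI)
      show "bang C T X \<in> Ar C" using bh by (simp add: hom_iff)
      fix a b assume ab: "a \<in> Ar C" "b \<in> Ar C" "Dom C a = Dom C b" "Cod C a = Dom C (bang C T X)"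
        "Cod C b = Dom C (bang C T X)" "Comp C (bang C T X) a = Comp C (bang C T X) b"
      have "a \<in> hom C (Dom C a) X" "b \<in> hom C (Dom C a) X" using ab bh by (auto simp: hom_iff)
      then show "a = b" using am.part2[OF am.intro[OF cat h] assms] by blast
    qed
  qed
  show ?thesis using 1 2 by blast
qed

end
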